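(* Let $n\in\mathbb{N}$ with $n\ge2$ and $I_n:=\int_{(0,\infty)^n}\mathrm{d}u\,\frac{|u|_1e^{-|u|_1}}{\prod_{j=1}^n(u_j+u_{j+1})}$, where $u_{n+1}:=u_1$ and $|u|_1:=u_1+\dots+u_n$. Then \[ I_n=\frac n2\int_{(0,\infty)^n}\mathrm{d}u\,\frac{e^{-|u|_1}}{\prod_{j=1}^{n-1}(u_j+u_{j+1})}. \] *)

theory Defs
  imports "HOL-Analysis.Analysis"
begin

text \<open>Points of (0,\<infinity>)^n are encoded as functions u :: nat \<Rightarrow> real with coordinates
  u 0, ..., u (n-1); the measure is the n-fold product of Lebesgue measure.\<close>

definition pos_orthant :: "nat \<Rightarrow> (nat \<Rightarrow> real) set" where
  "pos_orthant n = {u. \<forall>j<n. 0 < u j}"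

definition l1 :: "nat \<Rightarrow> (nat \<Rightarrow> real) \<Rightarrow> real" where
  "l1 n u = (\<Sum>j<n. u j)"

end

theory Submission
  imports Defs
begin

interpretation lb: product_sigma_finite "\<lambda>_::nat. lborel :: real measure"
  unfolding product_sigma_finite_def by (simp add: sigma_finite_lborel)

lemma distr_perm:
  fixes I :: "nat set"
  assumes fin: "finite I" and p: "bij_betw p I I"
  shows "distr (PiM I (\<lambda>_. lborel)) (PiM I (\<lambda>_. lborel :: real measure)) (\<lambda>\<omega>. \<lambda>i\<in>I. \<omega> (p i))
       = PiM I (\<lambda>_. lborel)"
proof (rule lb.PiM_eqI[OF fin])
  show "sets (distr (PiM I (\<lambda>_. lborel)) (PiM I (\<lambda>_. lborel :: real measure)) (\<lambda>\<omega>. \<lambda>i\<in>I. \<omega> (p i))) = sets (PiM I (\<lambda>_. lborel))"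
    by simp
  fix A :: "nat \<Rightarrow> real set" assume A: "\<And>i. i \<in> I \<Longrightarrow> A i \<in> sets lborel"
  define q where "q = inv_into I p"
  have q: "bij_betw q I I" unfolding q_def using p by (rule bij_betw_inv_into)
  have pI: "i \<in> I \<Longrightarrow> p i \<in> I" for i using p by (auto simp: bij_betw_def)
  have qI: "i \<in> I \<Longrightarrow> q i \<in> I" for i using q by (auto simp: bij_betw_def)
  have pq: "i \<in> I \<Longrightarrow> p (q i) = i" for i unfolding q_def using p
    by (simp add: bij_betw_def f_inv_into_f)
  have qp: "i \<in> I \<Longrightarrow> q (p i) = i" for i unfolding q_def using p
    by (simp add: bij_betw_def inv_into_f_f)
  have meas: "(\<lambda>\<omega>. \<lambda>i\<in>I. \<omega> (p i)) \<in> PiM I (\<lambda>_. lborel) \<rightarrow>\<^sub>M PiM I (\<lambda>_. lborel :: real measure)"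
    proof (rule measurable_restrict)
    fix i assume "i \<in> I"
    from measurable_component_singleton[OF pI[OF this], of "\<lambda>_. lborel :: real measure"]
    show "(\<lambda>x. x (p i)) \<in> Pi\<^sub>M I (\<lambda>_. lborel) \<rightarrow>\<^sub>M (lborel :: real measure)" .
  qed
  have set: "(\<lambda>\<omega>. \<lambda>i\<in>I. \<omega> (p i)) -` Pi\<^sub>E I A \<inter> space (PiM I (\<lambda>_. lborel :: real measure))
        = Pi\<^sub>E I (\<lambda>i. A (q i))"
  proof (intro set_eqI iffI)
    fix x assume x: "x \<in> (\<lambda>\<omega>. \<lambda>i\<in>I. \<omega> (p i)) -` Pi\<^sub>E I A \<inter> space (PiM I (\<lambda>_. lborel :: real measure))"
    show "x \<in> Pi\<^sub>E I (\<lambda>i. A (q i))"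
      using x by (auto simp: space_PiM PiE_iff) (metis pq qI)
  next
    fix x assume x: "x \<in> Pi\<^sub>E I (\<lambda>i. A (q i))"
    show "x \<in> (\<lambda>\<omega>. \<lambda>i\<in>I. \<omega> (p i)) -` Pi\<^sub>E I A \<inter> space (PiM I (\<lambda>_. lborel :: real measure))"
      using x by (auto simp: PiE_iff space_PiM) (metis qp pI)
  qed
  have "emeasure (distr (PiM I (\<lambda>_. lborel)) (PiM I (\<lambda>_. lborel :: real measure)) (\<lambda>\<omega>. \<lambda>i\<in>I. \<omega> (p i))) (Pi\<^sub>E I A)
      = emeasure (PiM I (\<lambda>_. lborel)) (Pi\<^sub>E I (\<lambda>i. A (q i)))"
    using A by (subst emeasure_distr[OF meas]) (auto intro!: sets_PiM_I_finite fin simp: set)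
  also have "\<dots> = (\<Prod>i\<in>I. emeasure lborel (A (q i)))"
    using A qI by (subst lb.emeasure_PiM[OF fin]) auto
  also have "\<dots> = (\<Prod>i\<in>I. emeasure lborel (A i))"
    using prod.reindex_bij_betw[OF q, of "\<lambda>i. emeasure lborel (A i)"] by simp
  finally show "emeasure (distr (PiM I (\<lambda>_. lborel)) (PiM I (\<lambda>_. lborel :: real measure)) (\<lambda>\<omega>. \<lambda>i\<in>I. \<omega> (p i))) (Pi\<^sub>E I A)
      = (\<Prod>i\<in>I. emeasure lborel (A i))" .
qed

lemma nn_perm:
  fixes I :: "nat set"
  assumes fin: "finite I" and p: "bij_betw p I I"
    and h: "h \<in> borel_measurable (PiM I (\<lambda>_. lborel :: real measure))"
  shows "(\<integral>\<^sup>+ u. h u \<partial>PiM I (\<lambda>_. lborel)) = (\<integral>\<^sup>+ u. h (\<lambda>i\<in>I. u (p i)) \<partial>PiM I (\<lambda>_. lborel))"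
proof -
  have pI: "i \<in> I \<Longrightarrow> p i \<in> I" for i using p by (auto simp: bij_betw_def)
  have meas: "(\<lambda>\<omega>. \<lambda>i\<in>I. \<omega> (p i)) \<in> PiM I (\<lambda>_. lborel) \<rightarrow>\<^sub>M PiM I (\<lambda>_. lborel :: real measure)"
    proof (rule measurable_restrict)
    fix i assume "i \<in> I"
    from measurable_component_singleton[OF pI[OF this], of "\<lambda>_. lborel :: real measure"]
    show "(\<lambda>x. x (p i)) \<in> Pi\<^sub>M I (\<lambda>_. lborel) \<rightarrow>\<^sub>M (lborel :: real measure)" .
  qed
  have "(\<integral>\<^sup>+ u. h u \<partial>PiM I (\<lambda>_. lborel)) = (\<integral>\<^sup>+ u. h u \<partial>distr (PiM I (\<lambda>_. lborel)) (PiM I (\<lambda>_. lborel :: real measure)) (\<lambda>\<omega>. \<lambda>i\<in>I. \<omega> (p i)))"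
    by (simp add: distr_perm[OF fin p])
  also have "\<dots> = (\<integral>\<^sup>+ u. h (\<lambda>i\<in>I. u (p i)) \<partial>PiM I (\<lambda>_. lborel))"
    using h by (subst nn_integral_distr[OF meas]) simp_all
  finally show ?thesis .
qed

lemma modinj: assumes "(x + s) mod n = (y + s) mod (n::nat)" "x < n" "y < n" shows "x = y"
proof -
  have n: "0 < n" using assms by auto
  define t where "t = n - s mod n"
  have e: "s div n * n + s mod n = s" by (rule div_mult_mod_eq)
  have st: "s + t = (s div n + 1) * n" unfolding t_def distrib_right mult_1
    using e mod_less_divisor[OF n, of s] by linarith
  have key: "((z + s) mod n + t) mod n = z" if "z < n" for z
  proof -
    have "((z + s) mod n + t) mod n = (z + (s + t)) mod n" by (simp add: mod_add_left_eq add.assoc)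
    also have "\<dots> = (z + (s div n + 1) * n) mod n" by (simp only: st)
    also have "\<dots> = z mod n" by (rule mod_mult_self1)
    finally show ?thesis using that by simp
  qed
  have "x = ((x + s) mod n + t) mod n" using key[OF assms(2)] by (rule sym)
  also have "\<dots> = ((y + s) mod n + t) mod n" by (simp only: assms(1))
  also have "\<dots> = y" by (rule key[OF assms(3)])
  finally show ?thesis .
qed

lemma rot_bij: "0 < n \<Longrightarrow> bij_betw (\<lambda>j. (j + s) mod (n::nat)) {..<n} {..<n}"
proof -
  assume n: "0 < n"
  have inj: "inj_on (\<lambda>j. (j + s) mod (n::nat)) {..<n}"
    by (rule inj_onI) (rule modinj, auto)
  have "(\<lambda>j. (j + s) mod (n::nat)) ` {..<n} = {..<n}"
    by (rule endo_inj_surj) (use n inj in auto)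
  with inj show ?thesis by (simp add: bij_betw_def)
qed

definition cyc :: "nat \<Rightarrow> (nat \<Rightarrow> real) \<Rightarrow> nat \<Rightarrow> real" where
  "cyc n u j = u j + u ((j + 1) mod n)"
definition Pr :: "nat \<Rightarrow> (nat \<Rightarrow> real) \<Rightarrow> real" where
  "Pr n u = (\<Prod>j<n. cyc n u j)"
definition G :: "nat \<Rightarrow> nat \<Rightarrow> (nat \<Rightarrow> real) \<Rightarrow> real" where
  "G n k u = exp (- l1 n u) * cyc n u k / Pr n u"

lemma comp_meas[measurable]: fixes n j :: nat shows "j < n \<Longrightarrow> (\<lambda>x. x j) \<in> borel_measurable (PiM {..<n} (\<lambda>_. lborel :: real measure))"
  using measurable_component_singleton[of j "{..<n}" "\<lambda>_. lborel :: real measure"] by simp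

lemma comp_meas2[measurable]: fixes n j :: nat assumes "0 < n" shows "(\<lambda>x. x (j mod n)) \<in> borel_measurable (PiM {..<n} (\<lambda>_. lborel :: real measure))"
  using assms by (intro comp_meas) simp

lemma ind_meas[measurable]: "(indicator (pos_orthant n) :: _ \<Rightarrow> ennreal) \<in> borel_measurable (PiM {..<n} (\<lambda>_. lborel :: real measure))"
proof -
  have "pos_orthant n \<inter> space (PiM {..<n} (\<lambda>_. lborel :: real measure)) = PiE {..<n} (\<lambda>_. {0<..})"
    by (auto simp: pos_orthant_def space_PiM PiE_iff)
  also have "\<dots> \<in> sets (PiM {..<n} (\<lambda>_. lborel :: real measure))"
    by (rule sets_PiM_I_finite) auto
  finally show ?thesis unfolding borel_measurable_indicator_iff .
qed

lemma G_meas: "0 < n \<Longrightarrow> k < n \<Longrightarrow> (\<lambda>u. ennreal (G n k u) * indicator (pos_orthant n) u) \<in> borel_measurable (PiM {..<n} (\<lambda>_. lborel))"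
  unfolding G_def Pr_def cyc_def l1_def
  by measurable


lemma sum_rot: assumes n: "0 < n" shows "(\<Sum>j<n. (f::nat\<Rightarrow>real) ((j + s) mod n)) = (\<Sum>j<n. f j)"
  using sum.reindex_bij_betw[OF rot_bij[OF n, where s=s], of f] by simp

lemma prod_rot: assumes n: "0 < n" shows "(\<Prod>j<n. (f::nat\<Rightarrow>real) ((j + s) mod n)) = (\<Prod>j<n. f j)"
  using prod.reindex_bij_betw[OF rot_bij[OF n, where s=s], of f] by simp

lemma pointwise: assumes n: "0 < n"
  shows "l1 n u * exp (- l1 n u) / Pr n u = (\<Sum>k<n. (1/2) * G n k u)"
proof -
  have "(\<Sum>k<n. cyc n u k) = (\<Sum>k<n. u k) + (\<Sum>k<n. u ((k + 1) mod n))"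
    by (simp add: cyc_def sum.distrib)
  also have "(\<Sum>k<n. u ((k + 1) mod n)) = (\<Sum>k<n. u k)" by (rule sum_rot[OF n])
  finally have l: "l1 n u = (1/2) * (\<Sum>k<n. cyc n u k)" by (simp add: l1_def)
  show ?thesis unfolding G_def l
    by (simp add: sum_distrib_left sum_distrib_right sum_divide_distrib algebra_simps)
qed

lemma rot_G:
  fixes n k :: nat
  assumes n: "0 < n" and k: "k < n"
  defines "s \<equiv> n - 1 - k"
  shows "ennreal (G n k (\<lambda>i\<in>{..<n}. u ((i + s) mod n))) * indicator (pos_orthant n) (\<lambda>i\<in>{..<n}. u ((i + s) mod n))
       = ennreal (G n (n - 1) u) * indicator (pos_orthant n) u"
proof -
  define v where "v = (\<lambda>i\<in>{..<n}. u ((i + s) mod n))"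
  have vj: "j < n \<Longrightarrow> v j = u ((j + s) mod n)" for j by (simp add: v_def)
  have cv: "j < n \<Longrightarrow> cyc n v j = cyc n u ((j + s) mod n)" for j
  proof -
    assume j: "j < n"
    have "v ((j + 1) mod n) = u (((j + 1) mod n + s) mod n)" using n by (simp add: vj)
    also have "((j + 1) mod n + s) mod n = ((j + s) mod n + 1) mod n"
    proof -
      have "((j + 1) mod n + s) mod n = (j + 1 + s) mod n" by (rule mod_add_left_eq)
      also have "\<dots> = (j + s + 1) mod n" by (simp add: algebra_simps)
      also have "\<dots> = ((j + s) mod n + 1) mod n" by (rule mod_add_left_eq[symmetric])
      finally show ?thesis .
    qed
    finally show ?thesis using j by (simp add: cyc_def vj)
  qed
  have l: "l1 n v = l1 n u" unfolding l1_def using sum_rot[OF n, of u s] by (simp add: vj)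
  have P: "Pr n v = Pr n u" unfolding Pr_def using prod_rot[OF n, of "cyc n u" s] by (simp add: cv)
  have ks: "(k + s) mod n = n - 1" using k n by (simp add: s_def)
  have G: "G n k v = G n (n - 1) u" unfolding G_def l P cv[OF k] ks ..
  have pos: "v \<in> pos_orthant n \<longleftrightarrow> u \<in> pos_orthant n"
  proof
    assume "v \<in> pos_orthant n"
    then have h: "\<forall>j<n. 0 < u ((j + s) mod n)" by (simp add: pos_orthant_def vj)
    show "u \<in> pos_orthant n" unfolding pos_orthant_def
    proof safe
      fix i assume "i < n"
      then have "i \<in> (\<lambda>j. (j + s) mod n) ` {..<n}" using rot_bij[OF n, where s=s] by (simp add: bij_betw_def)
      then show "0 < u i" using h by auto
    qed
  next
    assume "u \<in> pos_orthant n"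
    then show "v \<in> pos_orthant n" using n by (simp add: pos_orthant_def vj)
  qed
  show ?thesis unfolding v_def[symmetric] G by (simp add: indicator_def pos)
qed


theorem lemma4p27:
  fixes n :: nat
  assumes "n \<ge> 2"
  shows "(\<integral>\<^sup>+ u \<in> pos_orthant n.
            ennreal (l1 n u * exp (- l1 n u) / (\<Prod>j<n. u j + u ((j + 1) mod n)))
          \<partial>(PiM {..<n} (\<lambda>_. lborel)))
       = ennreal (real n / 2) *
         (\<integral>\<^sup>+ u \<in> pos_orthant n.
            ennreal (exp (- l1 n u) / (\<Prod>j<n - 1. u j + u (j + 1)))
          \<partial>(PiM {..<n} (\<lambda>_. lborel)))"
proof -
  let ?M = "PiM {..<n} (\<lambda>_. lborel :: real measure)"
  let ?P = "pos_orthant n"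
  have n: "0 < n" using assms by simp
  define J where "J = (\<integral>\<^sup>+ u. ennreal (G n (n - 1) u) * indicator ?P u \<partial>?M)"
  have Gnn: "0 \<le> G n k u" if "u \<in> ?P" "k < n" for k u
  proof -
    have c: "0 < cyc n u j" if "j < n" for j
      using \<open>u \<in> ?P\<close> that n by (auto simp: pos_orthant_def cyc_def intro!: add_pos_pos)
    have "0 < Pr n u" unfolding Pr_def by (rule prod_pos) (simp add: c)
    then show ?thesis unfolding G_def using c[OF \<open>k < n\<close>] by simp
  qed
  have "(\<integral>\<^sup>+ u \<in> ?P. ennreal (l1 n u * exp (- l1 n u) / (\<Prod>j<n. u j + u ((j + 1) mod n))) \<partial>?M)
      = (\<integral>\<^sup>+ u. (\<Sum>k<n. ennreal (1/2) * (ennreal (G n k u) * indicator ?P u)) \<partial>?M)"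
  proof (rule nn_integral_cong)
    fix u
    show "ennreal (l1 n u * exp (- l1 n u) / (\<Prod>j<n. u j + u ((j + 1) mod n))) * indicator ?P u
        = (\<Sum>k<n. ennreal (1/2) * (ennreal (G n k u) * indicator ?P u))"
    proof (cases "u \<in> ?P")
      case True
      have "ennreal (l1 n u * exp (- l1 n u) / (\<Prod>j<n. u j + u ((j + 1) mod n)))
          = ennreal (\<Sum>k<n. (1/2) * G n k u)"
        using pointwise[OF n, of u] by (simp add: Pr_def cyc_def)
      also have "\<dots> = (\<Sum>k<n. ennreal ((1/2) * G n k u))"
        by (rule sum_ennreal[symmetric]) (use Gnn True in auto)
      also have "\<dots> = (\<Sum>k<n. ennreal (1/2) * ennreal (G n k u))"
        by (intro sum.cong refl ennreal_mult) (use Gnn True in auto)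
      finally show ?thesis using True by simp
    next
      case False then show ?thesis by simp
    qed
  qed
  also have "\<dots> = (\<Sum>k<n. ennreal (1/2) * (\<integral>\<^sup>+ u. ennreal (G n k u) * indicator ?P u \<partial>?M))"
  proof -
    have m: "(\<lambda>u. ennreal (G n k u) * indicator ?P u) \<in> borel_measurable ?M" if "k \<in> {..<n}" for k
      using G_meas[OF n] that by simp
    have "(\<integral>\<^sup>+ u. (\<Sum>k<n. ennreal (1/2) * (ennreal (G n k u) * indicator ?P u)) \<partial>?M)
        = (\<Sum>k<n. (\<integral>\<^sup>+ u. ennreal (1/2) * (ennreal (G n k u) * indicator ?P u) \<partial>?M))"
      by (rule nn_integral_sum) (use m in auto)
    also have "\<dots> = (\<Sum>k<n. ennreal (1/2) * (\<integral>\<^sup>+ u. ennreal (G n k u) * indicator ?P u \<partial>?M))"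
      by (intro sum.cong refl nn_integral_cmult m)
    finally show ?thesis .
  qed
  also have "\<dots> = (\<Sum>k<n. ennreal (1/2) * J)"
  proof (intro sum.cong refl arg_cong2[where f="(*)"])
    fix k assume "k \<in> {..<n}"
    then have k: "k < n" by simp
    have "(\<integral>\<^sup>+ u. ennreal (G n k u) * indicator ?P u \<partial>?M)
        = (\<integral>\<^sup>+ u. ennreal (G n k (\<lambda>i\<in>{..<n}. u ((i + (n - 1 - k)) mod n)))
               * indicator ?P (\<lambda>i\<in>{..<n}. u ((i + (n - 1 - k)) mod n)) \<partial>?M)"
      by (rule nn_perm[OF _ rot_bij[OF n] G_meas[OF n k]]) simp
    also have "\<dots> = J" unfolding J_def by (simp only: rot_G[OF n k])
    finally show "(\<integral>\<^sup>+ u. ennreal (G n k u) * indicator ?P u \<partial>?M) = J" .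
  qed
  also have "\<dots> = ennreal (real n / 2) * J"
  proof -
    have e: "ennreal (real n / 2) = ennreal (real n) * ennreal (1/2)"
      using ennreal_mult[of "real n" "1/2"] by simp
    show ?thesis unfolding e by (simp add: ennreal_of_nat_eq_real_of_nat mult.assoc del: ennreal_half)
  qed
  also have "J = (\<integral>\<^sup>+ u \<in> ?P. ennreal (exp (- l1 n u) / (\<Prod>j<n - 1. u j + u (j + 1))) \<partial>?M)"
    unfolding J_def
  proof (rule nn_integral_cong)
    fix u
    show "ennreal (G n (n - 1) u) * indicator ?P u
        = ennreal (exp (- l1 n u) / (\<Prod>j<n - 1. u j + u (j + 1))) * indicator ?P u"
    proof (cases "u \<in> ?P")
      case True
      have c: "0 < cyc n u j" if "j < n" for j
        using True that n by (auto simp: pos_orthant_def cyc_def intro!: add_pos_pos)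
      have nn: "n = Suc (n - 1)" using n by simp
      have "Pr n u = (\<Prod>j<n - 1. cyc n u j) * cyc n u (n - 1)"
        unfolding Pr_def by (subst nn) (simp only: prod.lessThan_Suc diff_Suc_1)
      moreover have "(\<Prod>j<n - 1. cyc n u j) = (\<Prod>j<n - 1. u j + u (j + 1))"
        by (rule prod.cong) (auto simp: cyc_def)
      moreover have "cyc n u (n - 1) \<noteq> 0" using c n by (metis diff_less less_irrefl zero_less_one)
      ultimately have "G n (n - 1) u = exp (- l1 n u) / (\<Prod>j<n - 1. u j + u (j + 1))"
        unfolding G_def by simp
      then show ?thesis by simp
    next
      case False then show ?thesis by simp
    qed
  qed
  finally show ?thesis .
qed

end
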